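(* Let $n\ge0$, $r\in\mathcal{Y}_n$ and let $\mathsf{R}\subseteq[n]$ be an admissible set of internal nodes of $r$ (nodes labeled in-order). Then $r|_{\mathsf{R}}=r'_{\mathsf{R}}$ and $r|_{\mathsf{R}^c}=r''_{\mathsf{R}}$.
   Context: Permutations in one-line notation; $\mathrm{st}$ standardizes sequences of distinct integers. For $\sigma\in\mathfrak{S}_p,\tau\in\mathfrak{S}_q$, $\sigma\vee\tau=(\sigma(1)+q,..,\sigma(p)+q,p+q+1,\tau(1),..,\tau(q))$. Trees: $\mathcal{Y}_n$ = rooted planar binary trees with $n$ internal nodes, $\mathcal{Y}_0=\{|\}$; $s\vee t$ = root with left subtree $s$, right subtree $t$; $|\backslash t=t$, $s\backslash t=s_l\vee(s_r\backslash t)$. $\lambda(\mathrm{id}_0)=|$, $\lambda(\sigma)=\lambda(\mathrm{st}(\sigma(1..j-1)))\vee\lambda(\mathrm{st}(\sigma(j+1..n)))$ where $j=\sigma^{-1}(n)$; $\gamma(|)=\mathrm{id}_0$, $\gamma(t)=\gamma(t_l)\vee\gamma(t_r)$. For $\mathsf{R}=\{R_1<..<R_p\}\subseteq[n]$: $\rho|_{\mathsf{R}}=\mathrm{st}(\rho(R_1),..,\rho(R_p))$ and $r|_{\mathsf{R}}=\lambda(\gamma(r)|_{\mathsf{R}})$; $\mathsf{R}^c=[n]\setminus\mathsf{R}$. In-order labeling: if $r=s\vee t$ with $s\in\mathcal{Y}_{j-1}$, the root is labeled $j$, nodes of $s$ keep their labels, nodes of $t$ get their labels increased by $j$. $\mathsf{R}$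 is admissible if for each $x\in\mathsf{R}$ the left child of $x$ and all its internal descendants lie in $\mathsf{R}$. Pruning: cut every edge joining a node of $\mathsf{R}$ to a node not in $\mathsf{R}$; the pieces containing nodes of $\mathsf{R}$ are planar binary trees $r_1,..,r_p$ ordered left to right by the positions of their leaves, and $r'_{\mathsf{R}}=r_1\backslash\cdots\backslash r_p$; the remaining pieces are assembled into $r''_{\mathsf{R}}$ by grafting each piece onto the leaf, of the piece immediately below it, that lies below its root. Equivalently, recursively: $|'=|''=|$; for $r=s\vee t$, $\mathsf{S}=\mathsf{R}\cap s$, $\mathsf{T}=\mathsf{R}\cap t$: if the root is in $\mathsf{R}$, $r'_{\mathsf{R}}=s\vee t'_{\mathsf{T}}$, $r''_{\mathsf{R}}=t''_{\mathsf{T}}$; otherwise $r'_{\mathsf{R}}=s'_{\mathsf{S}}\backslash t'_{\mathsf{T}}$, $r''_{\mathsf{R}}=s''_{\mathsf{S}}\vee t''_{\mathsf{T}}$. *)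

theory Defs
  imports Main
begin

text \<open>Rooted planar binary trees; Leaf is the tree with no internal node.\<close>
datatype tree = Leaf | Node tree tree

fun isize :: "tree \<Rightarrow> nat" where
  "isize Leaf = 0"
| "isize (Node l r) = isize l + isize r + 1"

text \<open>Permutations in one-line notation as lists of naturals (values 1..n).
  Standardization of a sequence of distinct integers: replace each entry by its rank.\<close>
definition st :: "nat list \<Rightarrow> nat list" where
  "st xs = map (\<lambda>x. card {y \<in> set xs. y \<le> x}) xs"

lemma length_st[simp]: "length (st xs) = length xs"
  by (simp add: st_def)

definition vee :: "nat list \<Rightarrow> nat list \<Rightarrow> nat list" where
  "vee \<sigma> \<tau> = map (\<lambda>x. x + length \<tau>) \<sigma> @ [length \<sigma> + length \<tau> + 1] @ \<tau>"

lemma takeWhile_lt_helper: "c \<in> set xs \<Longrightarrow> length (takeWhile (\<lambda>x. x \<noteq> c) xs) < length xs"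
  by (induction xs) auto

text \<open>lambda: j = sigma^{-1}(n), the 1-based position of the value n = length sigma
  (so take (j-1) / drop j in 1-based terms).  On non-permutations (where n does not
  occur) the value is irrelevant junk (Leaf); lam is only ever applied to permutations.\<close>
function lam :: "nat list \<Rightarrow> tree" where
  "lam [] = Leaf"
| "lam (a # xs) =
     (let \<sigma> = a # xs; j = length (takeWhile (\<lambda>x. x \<noteq> length \<sigma>) \<sigma>)
      in if length \<sigma> \<in> set \<sigma>
         then Node (lam (st (take j \<sigma>))) (lam (st (drop (Suc j) \<sigma>)))
         else Leaf)"
  by pat_completeness auto
termination
  apply (relation "measure length")
    apply simp
  subgoal for a xs x xa using takeWhile_lt_helper[of "length x" x] by simp
  subgoal for a xs x xa by simp
  done

fun gam :: "tree \<Rightarrow> nat list" where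
  "gam Leaf = []"
| "gam (Node l r) = vee (gam l) (gam r)"

text \<open>Restriction of a permutation to a set R of positions (1-based).\<close>
definition restr_perm :: "nat list \<Rightarrow> nat set \<Rightarrow> nat list" where
  "restr_perm \<rho> R = st (map (\<lambda>i. \<rho> ! (i - 1)) (sorted_list_of_set R))"

definition restr_tree :: "tree \<Rightarrow> nat set \<Rightarrow> tree" where
  "restr_tree r R = lam (restr_perm (gam r) R)"

fun under :: "tree \<Rightarrow> tree \<Rightarrow> tree" where
  "under Leaf t = t"
| "under (Node sl sr) t = Node sl (under sr t)"

text \<open>In-order labeling: lsub r x = labels of the left child of node x and all its internal
  descendants (i.e. the internal nodes of the left subtree of x).\<close>
fun lsub :: "tree \<Rightarrow> nat \<Rightarrow> nat set" where
  "lsub Leaf x = {}"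
| "lsub (Node s t) x =
     (let j = isize s + 1 in
      if x = j then {1..isize s}
      else if x < j then lsub s x
      else (\<lambda>y. y + j) ` lsub t (x - j))"

definition admissible :: "tree \<Rightarrow> nat set \<Rightarrow> bool" where
  "admissible r R \<longleftrightarrow> R \<subseteq> {1..isize r} \<and> (\<forall>x\<in>R. lsub r x \<subseteq> R)"

text \<open>Pruning, via the recursive description (labels of the right subtree are shifted back).\<close>
fun prune1 :: "tree \<Rightarrow> nat set \<Rightarrow> tree" where
  "prune1 Leaf R = Leaf"
| "prune1 (Node s t) R =
     (let j = isize s + 1; S = {x \<in> R. x < j}; T = (\<lambda>x. x - j) ` {x \<in> R. j < x} in
      if j \<in> R then Node s (prune1 t T) else under (prune1 s S) (prune1 t T))"

fun prune2 :: "tree \<Rightarrow> nat set \<Rightarrow> tree" where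
  "prune2 Leaf R = Leaf"
| "prune2 (Node s t) R =
     (let j = isize s + 1; S = {x \<in> R. x < j}; T = (\<lambda>x. x - j) ` {x \<in> R. j < x} in
      if j \<in> R then prune2 t T else Node (prune2 s S) (prune2 t T))"

end

theory Submission
  imports Defs
begin

lemma tw_lt: "length (takeWhile (\<lambda>x. x \<noteq> Max (set (a#xs))) (a#xs)) < Suc (length xs)"
proof -
  have "Max (set (a#xs)) \<in> set (a#xs)" by (rule Max_in) auto
  from takeWhile_lt_helper[OF this] show ?thesis by (simp only: length_Cons)
qed

function dtree :: "nat list \<Rightarrow> tree" where
  "dtree [] = Leaf"
| "dtree (a # xs) =
     (let k = length (takeWhile (\<lambda>x. x \<noteq> Max (set (a # xs))) (a # xs))
      in Node (dtree (take k (a # xs))) (dtree (drop (Suc k) (a # xs))))"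
  by pat_completeness auto
termination
  apply (relation "measure length")
    apply simp
  subgoal for a xs x using tw_lt[of a xs] by (simp del: takeWhile.simps)
  subgoal by simp
  done

lemma dtree_split:
  assumes "\<forall>x\<in>set as. x < m" "\<forall>x\<in>set bs. x \<le> m"
  shows "dtree (as @ m # bs) = Node (dtree as) (dtree bs)"
proof -
  obtain a ys where e: "as @ m # bs = a # ys" by (cases as) auto
  have mx: "Max (set (as @ m # bs)) = m"
    using assms by (intro Max_eqI) auto
  have tw: "takeWhile (\<lambda>x. x \<noteq> m) (as @ m # bs) = as"
    using assms by (subst takeWhile_append2) auto
  have "dtree (a # ys) = Node (dtree as) (dtree bs)"
    using mx tw unfolding e
    by (simp only: dtree.simps Let_def) (simp add: e[symmetric])
  then show ?thesis using e by simp
qed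

lemma split_max:
  fixes xs :: "nat list"
  assumes "xs \<noteq> []"
  shows "\<exists>as m bs. xs = as @ m # bs \<and> (\<forall>x\<in>set as. x < m) \<and> (\<forall>x\<in>set bs. x \<le> m)"
proof -
  have "Max (set xs) \<in> set xs" using assms by simp
  then obtain as bs where 1: "xs = as @ Max (set xs) # bs" "Max (set xs) \<notin> set as"
    using split_list_first by metis
  have 2: "\<forall>x\<in>set xs. x \<le> Max (set xs)" by simp
  have "\<forall>x\<in>set as. x < Max (set xs)"
  proof
    fix x assume "x \<in> set as"
    have "x \<in> set xs" using 1(1) \<open>x \<in> set as\<close> by (metis Un_iff set_append)
    moreover have "x \<noteq> Max (set xs)" using 1(2) \<open>x \<in> set as\<close> by blast
    ultimately
    show "x < Max (set xs)" using 2 by (simp add: order_less_le)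
  qed
  moreover have "\<forall>x\<in>set bs. x \<le> Max (set xs)" using 2 1(1)
    by (metis Un_iff list.set_intros(2) set_append)
  ultimately show ?thesis using 1 by blast
qed

lemma dtree_mono:
  "strict_mono_on (set xs) f \<Longrightarrow> dtree (map f xs) = dtree xs"
proof (induction "length xs" arbitrary: xs rule: less_induct)
  case less
  show ?case
  proof (cases "xs = []")
    case True then show ?thesis by simp
  next
    case False
    then obtain as m bs where d: "xs = as @ m # bs" "\<forall>x\<in>set as. x < m"
      "\<forall>x\<in>set bs. x \<le> m" using split_max by blast
    have sm: "strict_mono_on (set as) f" "strict_mono_on (set bs) f"
      using less.prems d(1) by (auto intro: monotone_on_subset)
    have "\<forall>x\<in>set (map f as). x < f m"
      using d less.prems by (auto dest: strict_mono_onD)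
    moreover have "\<forall>x\<in>set (map f bs). x \<le> f m"
      using d less.prems by (auto intro: strict_mono_on_leD)
    ultimately have "dtree (map f xs) = Node (dtree (map f as)) (dtree (map f bs))"
      using d(1) by (simp add: dtree_split)
    also have "\<dots> = Node (dtree as) (dtree bs)"
      using less.hyps sm d(1) by simp
    also have "\<dots> = dtree xs" using d by (simp add: dtree_split)
    finally show ?thesis .
  qed
qed

lemma dtree_under:
  "\<forall>a\<in>set A. \<forall>b\<in>set B. b < a \<Longrightarrow> dtree (A @ B) = under (dtree A) (dtree B)"
proof (induction "length A" arbitrary: A rule: less_induct)
  case less
  show ?case
  proof (cases "A = []")
    case True then show ?thesis by simp
  next
    case False
    then obtain as m bs where d: "A = as @ m # bs" "\<forall>x\<in>set as. x < m"
      "\<forall>x\<in>set bs. x \<le> m" using split_max by blast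
    have "\<forall>x\<in>set (bs @ B). x \<le> m" using d less.prems by fastforce
    then have "dtree (A @ B) = Node (dtree as) (dtree (bs @ B))"
      using d by (simp add: dtree_split)
    also have "dtree (bs @ B) = under (dtree bs) (dtree B)"
      using less.hyps[of bs] less.prems d(1) by simp
    also have "Node (dtree as) (under (dtree bs) (dtree B)) = under (dtree A) (dtree B)"
      using d by (simp add: dtree_split)
    finally show ?thesis .
  qed
qed

definition rk :: "nat list \<Rightarrow> nat \<Rightarrow> nat" where
  "rk xs x = card {y \<in> set xs. y \<le> x}"

lemma st_rk: "st xs = map (rk xs) xs"
  by (simp add: st_def rk_def)

lemma lam_ne: "\<sigma> \<noteq> [] \<Longrightarrow> lam \<sigma> = (if length \<sigma> \<in> set \<sigma>
   then Node (lam (st (take (length (takeWhile (\<lambda>x. x \<noteq> length \<sigma>) \<sigma>)) \<sigma>)))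
             (lam (st (drop (Suc (length (takeWhile (\<lambda>x. x \<noteq> length \<sigma>) \<sigma>))) \<sigma>)))
   else Leaf)"
proof (cases \<sigma>)
  case (Cons a list)
  then show ?thesis by (simp only: lam.simps Let_def)
qed simp

lemma rk_smono2: "strict_mono_on (set xs) (rk xs)"
proof (rule strict_mono_onI)
  fix x y assume "x \<in> set xs" "y \<in> set xs" "x < y"
  then have "y \<in> {z \<in> set xs. z \<le> y} - {z \<in> set xs. z \<le> x}" by auto
  moreover have "{z \<in> set xs. z \<le> x} \<subseteq> {z \<in> set xs. z \<le> y}" using \<open>x < y\<close> by auto
  ultimately have "{z \<in> set xs. z \<le> x} \<subset> {z \<in> set xs. z \<le> y}" by blast
  then show "rk xs x < rk xs y" unfolding rk_def
    by (intro psubset_card_mono) auto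
qed

lemma st_map:
  assumes "strict_mono_on (set ys) f"
  shows "st (map f ys) = st ys"
proof -
  have "card {y \<in> f ` set ys. y \<le> f x} = card {y \<in> set ys. y \<le> x}" if "x \<in> set ys" for x
  proof -
    have "{y \<in> f ` set ys. y \<le> f x} = f ` {y \<in> set ys. y \<le> x}"
      using strict_mono_on_less_eq[OF assms _ that] by auto
    moreover have "inj_on f {y \<in> set ys. y \<le> x}"
      using strict_mono_on_imp_inj_on[OF assms] by (rule inj_on_subset) auto
    ultimately show ?thesis by (simp add: card_image)
  qed
  then show ?thesis by (simp add: st_def)
qed

lemma lam_st: "distinct xs \<Longrightarrow> lam (st xs) = dtree xs"
proof (induction "length xs" arbitrary: xs rule: less_induct)
  case less
  show ?case
  proof (cases "xs = []")
    case True then show ?thesis by (simp add: st_def)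
  next
    case False
    then obtain as m bs where d: "xs = as @ m # bs" "\<forall>x\<in>set as. x < m"
      "\<forall>x\<in>set bs. x \<le> m" using split_max by blast
    let ?g = "rk xs"
    have sm: "strict_mono_on (set xs) ?g" by (rule rk_smono2)
    have gm: "?g m = length xs"
    proof -
      have "{y \<in> set xs. y \<le> m} = set xs" using d by auto
      then show ?thesis using less.prems distinct_card unfolding rk_def by metis
    qed
    have ga: "\<forall>x\<in>set (map ?g as). x < ?g m"
      using d sm by (auto dest: strict_mono_onD)
    have sx: "st xs = map ?g as @ ?g m # map ?g bs" using d(1) by (simp add: st_rk)
    have ne: "st xs \<noteq> []" using sx by simp
    have tw: "takeWhile (\<lambda>x. x \<noteq> ?g m) (st xs) = map ?g as"
      unfolding sx using ga by (subst takeWhile_append2) auto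
    have lm: "length (st xs) = ?g m" using gm by simp
    have "lam (st xs) = Node (lam (st (map ?g as))) (lam (st (map ?g bs)))"
      using lam_ne[OF ne] tw lm sx by simp
    also have "st (map ?g as) = st as"
      by (rule st_map, rule monotone_on_subset[OF sm]) (auto simp add: d(1))
    also have "st (map ?g bs) = st bs"
      by (rule st_map, rule monotone_on_subset[OF sm]) (auto simp add: d(1))
    also have "lam (st as) = dtree as" using less d(1) by simp
    also have "lam (st bs) = dtree bs" using less d(1) by simp
    also have "Node (dtree as) (dtree bs) = dtree xs" using d by (simp add: dtree_split)
    finally show ?thesis .
  qed
qed

fun selk :: "nat list \<Rightarrow> (nat \<Rightarrow> bool) \<Rightarrow> nat list" where
  "selk [] P = []"
| "selk (x # xs) P = (if P 1 then [x] else []) @ selk xs (\<lambda>i. P (Suc i))"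

lemma selk_append: "selk (xs @ ys) P = selk xs P @ selk ys (\<lambda>i. P (i + length xs))"
  by (induction xs arbitrary: P) auto

lemma selk3: "selk (A @ x # B) P =
  selk A P @ (if P (Suc (length A)) then [x] else []) @ selk B (\<lambda>i. P (i + Suc (length A)))"
  by (simp add: selk_append)

lemma selk_map: "selk (map f xs) P = map f (selk xs P)"
  by (induction xs arbitrary: P) auto

lemma selk_cong: "(\<And>i. 1 \<le> i \<Longrightarrow> i \<le> length xs \<Longrightarrow> P i = Q i) \<Longrightarrow> selk xs P = selk xs Q"
proof (induction xs arbitrary: P Q)
  case (Cons x xs)
  have "P 1 = Q 1" using Cons.prems by simp
  moreover have "selk xs (\<lambda>i. P (Suc i)) = selk xs (\<lambda>i. Q (Suc i))"
    using Cons.prems by (intro Cons.IH) auto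
  ultimately show ?case by simp
qed simp

lemma selk_set: "set (selk xs P) \<subseteq> set xs"
  by (induction xs arbitrary: P) auto

lemma selk_distinct: "distinct xs \<Longrightarrow> distinct (selk xs P)"
  by (induction xs arbitrary: P) (auto dest: selk_set[THEN subsetD])

lemma selk_all: "(\<And>i. 1 \<le> i \<Longrightarrow> i \<le> length xs \<Longrightarrow> P i) \<Longrightarrow> selk xs P = xs"
proof -
  assume "\<And>i. 1 \<le> i \<Longrightarrow> i \<le> length xs \<Longrightarrow> P i"
  then have "selk xs P = selk xs (\<lambda>_. True)" by (intro selk_cong) auto
  also have "\<dots> = xs" by (induction xs) auto
  finally show ?thesis .
qed

lemma selk_none: "(\<And>i. 1 \<le> i \<Longrightarrow> i \<le> length xs \<Longrightarrow> \<not> P i) \<Longrightarrow> selk xs P = []"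
proof -
  assume "\<And>i. 1 \<le> i \<Longrightarrow> i \<le> length xs \<Longrightarrow> \<not> P i"
  then have "selk xs P = selk xs (\<lambda>_. False)" by (intro selk_cong) auto
  also have "\<dots> = []" by (induction xs) auto
  finally show ?thesis .
qed

lemma selk_filter: "map (\<lambda>i. xs ! (i - 1)) (filter P [1..<length xs + 1]) = selk xs P"
proof (induction xs arbitrary: P)
  case Nil then show ?case by simp
next
  case (Cons x xs)
  have u: "[1..<length (x # xs) + 1] = 1 # map Suc [1..<length xs + 1]"
    by (simp add: upt_conv_Cons map_Suc_upt del: upt_Suc)
  have A: "map (\<lambda>i. (x # xs) ! i) (filter (\<lambda>i. P (Suc i)) [1..<length xs + 1])
      = map (\<lambda>i. xs ! (i - 1)) (filter (\<lambda>i. P (Suc i)) [1..<length xs + 1])"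
    by (rule map_cong) (auto simp: nth_Cons')
  moreover have "map (\<lambda>i. (x # xs) ! (i - 1)) (filter P [1..<length (x # xs) + 1])
    = (if P 1 then [x] else []) @
      map (\<lambda>i. (x # xs) ! i) (filter (\<lambda>i. P (Suc i)) [1..<length xs + 1])"
    by (simp only: u) (simp add: filter_map o_def del: upt_Suc)
  then show ?case using Cons.IH[of "\<lambda>i. P (Suc i)"] A
    by (simp del: upt_Suc)
qed

lemma sorted_filter_upt:
  assumes "R \<subseteq> {1..n}"
  shows "sorted_list_of_set R = filter (\<lambda>i. i \<in> R) [1..<n + 1]"
proof (rule sorted_distinct_set_unique)
  have "finite R" using assms finite_subset by blast
  then show "sorted (sorted_list_of_set R)" "distinct (sorted_list_of_set R)" by auto
  show "sorted (filter (\<lambda>i. i \<in> R) [1..<n + 1])" by (rule sorted_wrt_filter[OF sorted_upt])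
  show "distinct (filter (\<lambda>i. i \<in> R) [1..<n + 1])" by simp
  show "set (sorted_list_of_set R) = set (filter (\<lambda>i. i \<in> R) [1..<n + 1])"
    using assms \<open>finite R\<close> by auto
qed

lemma gam_node: "gam (Node s t) = map (\<lambda>x. x + isize t) (gam s) @ (isize s + isize t + 1) # gam t"
  and gam_len: "length (gam r) = isize r"
proof -
  show l: "\<And>r. length (gam r) = isize r"
  proof -
    fix r show "length (gam r) = isize r" by (induction r) (auto simp: vee_def)
  qed
  show "gam (Node s t) = map (\<lambda>x. x + isize t) (gam s) @ (isize s + isize t + 1) # gam t"
    by (simp add: vee_def l)
qed

lemma gam_set: "set (gam r) = {1..isize r}"
proof (induction r)
  case (Node s t)
  show ?case unfolding gam_node using Node
    by (auto simp: image_iff)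
qed simp

lemma gam_dist: "distinct (gam r)"
proof (induction r)
  case (Node s t)
  show ?case unfolding gam_node using Node gam_set[of s] gam_set[of t]
    by (auto simp: distinct_map inj_on_def)
qed simp

lemma smono_add: "strict_mono_on A (\<lambda>x::nat. x + q)"
  by (rule strict_mono_onI) simp

lemma gam_dtree: "dtree (gam r) = r"
proof (induction r)
  case (Node s t)
  have "dtree (gam (Node s t)) = Node (dtree (map (\<lambda>x. x + isize t) (gam s))) (dtree (gam t))"
    unfolding gam_node using gam_set[of s] gam_set[of t]
    by (intro dtree_split) auto
  then show ?case using Node by (simp add: dtree_mono[OF smono_add])
qed simp

lemma lsub_sub: "lsub r x \<subseteq> {1..isize r}"
proof (induction r arbitrary: x)
  case (Node s t)
  show ?case using Node.IH(1)[of x] Node.IH(2)[of "x - (isize s + 1)"]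
    by (auto simp: Let_def)
qed simp

lemma main:
  "admissible r R \<Longrightarrow>
   dtree (selk (gam r) (\<lambda>i. i \<in> R)) = prune1 r R \<and> dtree (selk (gam r) (\<lambda>i. i \<notin> R)) = prune2 r R"
proof (induction r arbitrary: R)
  case Leaf then show ?case by simp
next
  case (Node s t)
  define p where "p = isize s"
  define q where "q = isize t"
  define S where "S = {x \<in> R. x < Suc p}"
  define T where "T = (\<lambda>x. x - Suc p) ` {x \<in> R. Suc p < x}"
  have adm: "R \<subseteq> {1..p + q + 1}" "\<And>x. x \<in> R \<Longrightarrow> lsub (Node s t) x \<subseteq> R"
    using Node.prems unfolding admissible_def p_def q_def by auto
  have Tiff: "i \<in> T \<longleftrightarrow> i + Suc p \<in> R" if "1 \<le> i" for i
  proof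
    assume "i \<in> T" then show "i + Suc p \<in> R" unfolding T_def by auto
  next
    assume "i + Suc p \<in> R"
    moreover have "i = (i + Suc p) - Suc p" by simp
    ultimately show "i \<in> T" unfolding T_def using that by (intro image_eqI) auto
  qed
  have admS: "admissible s S"
    unfolding admissible_def
  proof
    show "S \<subseteq> {1..isize s}" using adm(1) unfolding S_def p_def by auto
    show "\<forall>x\<in>S. lsub s x \<subseteq> S"
    proof
      fix x assume x: "x \<in> S"
      then have "lsub (Node s t) x = lsub s x" unfolding S_def p_def by auto
      then show "lsub s x \<subseteq> S" using adm(2)[of x] x lsub_sub[of s x]
        unfolding S_def p_def by auto
    qed
  qed
  have admT: "admissible t T"
    unfolding admissible_def
  proof
    show "T \<subseteq> {1..isize t}"
    proof
      fix y assume "y \<in> T"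
      then obtain x where x: "x \<in> R" "Suc p < x" "y = x - Suc p" unfolding T_def by auto
      then have "x \<le> p + q + 1" using adm(1) by auto
      then show "y \<in> {1..isize t}" using x unfolding q_def by auto
    qed
    show "\<forall>x\<in>T. lsub t x \<subseteq> T"
    proof
      fix y assume y: "y \<in> T"
      then obtain x where x: "x \<in> R" "Suc p < x" "y = x - Suc p" unfolding T_def by auto
      then have "lsub (Node s t) x = (\<lambda>z. z + Suc p) ` lsub t y" unfolding p_def by auto
      then have "\<forall>z\<in>lsub t y. z + Suc p \<in> R" using adm(2)[OF x(1)] by auto
      then show "lsub t y \<subseteq> T" using lsub_sub[of t y] Tiff by auto
    qed
  qed
  have IHs: "dtree (selk (gam s) (\<lambda>i. i \<in> S)) = prune1 s S"
            "dtree (selk (gam s) (\<lambda>i. i \<notin> S)) = prune2 s S"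
    using Node.IH(1)[OF admS] by auto
  have IHt: "dtree (selk (gam t) (\<lambda>i. i \<in> T)) = prune1 t T"
            "dtree (selk (gam t) (\<lambda>i. i \<notin> T)) = prune2 t T"
    using Node.IH(2)[OF admT] by auto
  have g: "gam (Node s t) = map (\<lambda>x. x + q) (gam s) @ (p + q + 1) # gam t"
    unfolding p_def q_def by (rule gam_node)
  have ls: "length (map (\<lambda>x. x + q) (gam s)) = p" by (simp add: gam_len p_def)
  have cs1: "selk (gam s) (\<lambda>i. i \<in> R) = selk (gam s) (\<lambda>i. i \<in> S)"
    by (rule selk_cong) (auto simp: S_def gam_len p_def)
  have cs2: "selk (gam s) (\<lambda>i. i \<notin> R) = selk (gam s) (\<lambda>i. i \<notin> S)"
    by (rule selk_cong) (auto simp: S_def gam_len p_def)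
  have ct1: "selk (gam t) (\<lambda>i. i + Suc p \<in> R) = selk (gam t) (\<lambda>i. i \<in> T)"
    by (rule selk_cong) (simp add: Tiff)
  have ct2: "selk (gam t) (\<lambda>i. i + Suc p \<notin> R) = selk (gam t) (\<lambda>i. i \<notin> T)"
    by (rule selk_cong) (simp add: Tiff)
  have L1: "selk (gam (Node s t)) (\<lambda>i. i \<in> R) =
     map (\<lambda>x. x + q) (selk (gam s) (\<lambda>i. i \<in> S)) @ (if Suc p \<in> R then [p + q + 1] else [])
     @ selk (gam t) (\<lambda>i. i \<in> T)"
    unfolding g selk3 ls selk_map cs1 ct1 by simp
  have L2: "selk (gam (Node s t)) (\<lambda>i. i \<notin> R) =
     map (\<lambda>x. x + q) (selk (gam s) (\<lambda>i. i \<notin> S)) @ (if Suc p \<in> R then [] else [p + q + 1])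
     @ selk (gam t) (\<lambda>i. i \<notin> T)"
    unfolding g selk3 ls selk_map cs2 ct2 by simp
  have vs: "\<And>P. \<forall>x\<in>set (map (\<lambda>x. x + q) (selk (gam s) P)). q < x \<and> x < p + q + 1"
    using selk_set[of "gam s"] gam_set[of s] unfolding p_def by fastforce
  have vt: "\<And>P. \<forall>x\<in>set (selk (gam t) P). x \<le> q"
    using selk_set[of "gam t"] gam_set[of t] unfolding q_def by fastforce
  have dm: "\<And>xs. dtree (map (\<lambda>x. x + q) xs) = dtree xs" by (rule dtree_mono[OF smono_add])
  have p1: "prune1 (Node s t) R = (if Suc p \<in> R then Node s (prune1 t T) else under (prune1 s S) (prune1 t T))"
    by (simp add: Let_def p_def S_def T_def)
  have p2: "prune2 (Node s t) R = (if Suc p \<in> R then prune2 t T else Node (prune2 s S) (prune2 t T))"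
    by (simp add: Let_def p_def S_def T_def)
  show ?case
  proof (cases "Suc p \<in> R")
    case True
    have "lsub (Node s t) (Suc p) = {1..p}" unfolding p_def by simp
    then have sub: "{1..p} \<subseteq> R" using adm(2)[OF True] by simp
    have "selk (gam s) (\<lambda>i. i \<in> S) = gam s"
      by (rule selk_all) (use sub in \<open>auto simp: S_def gam_len p_def\<close>)
    moreover have "selk (gam s) (\<lambda>i. i \<notin> S) = []"
      by (rule selk_none) (use sub in \<open>auto simp: S_def gam_len p_def\<close>)
    ultimately have "selk (gam (Node s t)) (\<lambda>i. i \<in> R) =
        map (\<lambda>x. x + q) (gam s) @ (p + q + 1) # selk (gam t) (\<lambda>i. i \<in> T)"
      and "selk (gam (Node s t)) (\<lambda>i. i \<notin> R) = selk (gam t) (\<lambda>i. i \<notin> T)"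
      using L1 L2 True by simp_all
    moreover have "dtree (map (\<lambda>x. x + q) (gam s) @ (p + q + 1) # selk (gam t) (\<lambda>i. i \<in> T))
        = Node s (prune1 t T)"
      using vs[of "\<lambda>_. True"] vt[of "\<lambda>i. i \<in> T"] selk_all[of "gam s" "\<lambda>_. True"]
      by (subst dtree_split) (auto simp: dm gam_dtree IHt)
    ultimately show ?thesis using p1 p2 True IHt by simp
  next
    case False
    have "dtree (selk (gam (Node s t)) (\<lambda>i. i \<in> R)) = under (prune1 s S) (prune1 t T)"
      unfolding L1 using False vs[of "\<lambda>i. i \<in> S"] vt[of "\<lambda>i. i \<in> T"]
      by (subst dtree_under) (fastforce, simp add: dm IHs IHt)
    moreover have "dtree (selk (gam (Node s t)) (\<lambda>i. i \<notin> R)) = Node (prune2 s S) (prune2 t T)"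
    proof -
      have "dtree (map (\<lambda>x. x + q) (selk (gam s) (\<lambda>i. i \<notin> S)) @ (p + q + 1) # selk (gam t) (\<lambda>i. i \<notin> T))
        = Node (dtree (map (\<lambda>x. x + q) (selk (gam s) (\<lambda>i. i \<notin> S)))) (dtree (selk (gam t) (\<lambda>i. i \<notin> T)))"
        using vs[of "\<lambda>i. i \<notin> S"] vt[of "\<lambda>i. i \<notin> T"] by (intro dtree_split) auto
      then show ?thesis unfolding L2 using False by (simp add: dm IHs IHt)
    qed
    ultimately show ?thesis using p1 p2 False by simp
  qed
qed

theorem lemma8p9:
  fixes r :: tree and R :: "nat set"
  assumes "admissible r R"
  shows "restr_tree r R = prune1 r R \<and> restr_tree r ({1..isize r} - R) = prune2 r R"
proof -
  have R: "R \<subseteq> {1..length (gam r)}" using assms by (simp add: admissible_def gam_len)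
  have R': "{1..isize r} - R \<subseteq> {1..length (gam r)}" by (auto simp: gam_len)
  have a: "restr_tree r R = dtree (selk (gam r) (\<lambda>i. i \<in> R))"
    unfolding restr_tree_def restr_perm_def sorted_filter_upt[OF R] selk_filter
    by (rule lam_st[OF selk_distinct[OF gam_dist]])
  have b: "restr_tree r ({1..isize r} - R) = dtree (selk (gam r) (\<lambda>i. i \<notin> R))"
  proof -
    have "restr_tree r ({1..isize r} - R) = dtree (selk (gam r) (\<lambda>i. i \<in> {1..isize r} - R))"
      unfolding restr_tree_def restr_perm_def sorted_filter_upt[OF R'] selk_filter
      by (rule lam_st[OF selk_distinct[OF gam_dist]])
    also have "selk (gam r) (\<lambda>i. i \<in> {1..isize r} - R) = selk (gam r) (\<lambda>i. i \<notin> R)"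
      by (rule selk_cong) (auto simp: gam_len)
    finally show ?thesis .
  qed
  show ?thesis using a b main[OF assms] by simp
qed

end
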